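(* For $1\leq d<m$, let $U_m^d$ denote the uniform matroid of rank $d$ on $m$ elements, let $F_m^d(z)=\sum_{i=0}^{d}\binom{m}{i}z^i$ be its rank-generating function, and let $H_m^d(q):=(1-q)^{d}F_m^d\left(\frac{q}{1-q}\right)$. If $q\in\mathbb{C}$ satisfies $H_m^d(q)=0$, then $(m-d)^{-1}\leq |q|\leq d(m-1)^{-1}$. In particular, $H_m^d(q)$ is Schur quasi-stable (all its complex zeros satisfy $|q|\leq 1$), i.e. $U_m^d$ belongs to the class of set systems whose $H$-polynomial is Schur quasi-stable.
   Context: For a set system $\Omega$ of degree $d$ (maximum face size) with $f_i$ faces of size $i$, the rank-generating function is $F_\Omega(z)=\sum_{i=0}^d f_i z^i$, and the $H$-polynomial is $H_\Omega(q):=(1-q)^{d}F_\Omega\left(\frac{q}{1-q}\right)$. A polynomial is Schur quasi-stable if all its complex zeros satisfy $|q|\leq 1$. *)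

theory Defs
  imports "HOL-Analysis.Analysis" "HOL-Computational_Algebra.Polynomial"
begin

definition unif_rank_gen :: "nat \<Rightarrow> nat \<Rightarrow> complex poly" where
  "unif_rank_gen m d = (\<Sum>i\<le>d. monom (of_nat (m choose i)) i)"

text \<open>H-polynomial (1-q)^d F(q/(1-q)), written out as the polynomial
  sum_{i=0}^d f_i q^i (1-q)^(d-i) with f_i the coefficients of F, which equals it for all q with q \<noteq> 1.\<close>
definition unif_H :: "nat \<Rightarrow> nat \<Rightarrow> complex poly" where
  "unif_H m d = (\<Sum>i\<le>d. smult (coeff (unif_rank_gen m d) i) ([:0, 1:] ^ i * [:1, -1:] ^ (d - i)))"

definition schur_quasi_stable :: "complex poly \<Rightarrow> bool" where
  "schur_quasi_stable p \<longleftrightarrow> (\<forall>q. poly p q = 0 \<longrightarrow> cmod q \<le> 1)"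


end

theory Submission imports Defs begin

lemma g_step1:
  fixes q :: complex
  shows "(\<Sum>i\<le>Suc d. of_nat (Suc N choose i) * q^i * (1-q)^(Suc d - i)) =
    (\<Sum>i\<le>Suc d. of_nat (N choose i) * q^i * (1-q)^(Suc d - i)) + q * (\<Sum>i\<le>d. of_nat (N choose i) * q^i * (1-q)^(d - i))"
proof -
  have L: "(\<Sum>i\<le>Suc d. of_nat (Suc N choose i) * q^i * (1-q)^(Suc d - i)) =
     (1-q)^Suc d + (\<Sum>i\<le>d. of_nat (N choose Suc i) * q^Suc i * (1-q)^(d - i)) + (\<Sum>i\<le>d. of_nat (N choose i) * q^Suc i * (1-q)^(d - i))"
    by (subst sum.atMost_Suc_shift) (simp add: sum.distrib algebra_simps)
  have R: "(\<Sum>i\<le>Suc d. of_nat (N choose i) * q^i * (1-q)^(Suc d - i)) =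
     (1-q)^Suc d + (\<Sum>i\<le>d. of_nat (N choose Suc i) * q^Suc i * (1-q)^(d - i))"
    by (subst sum.atMost_Suc_shift) simp
  show ?thesis unfolding L R by (simp add: sum_distrib_left algebra_simps)
qed

lemma g_step2:
  fixes q :: complex
  shows "(\<Sum>i\<le>Suc d. of_nat (N choose i) * q^i * (1-q)^(Suc d - i)) =
    (1 - q) * (\<Sum>i\<le>d. of_nat (N choose i) * q^i * (1-q)^(d - i)) + of_nat (N choose Suc d) * q ^ Suc d"
proof -
  have "(\<Sum>i\<le>d. of_nat (N choose i) * q^i * (1-q)^(Suc d - i)) = (1 - q) * (\<Sum>i\<le>d. of_nat (N choose i) * q^i * (1-q)^(d - i))"
    unfolding sum_distrib_left
    by (rule sum.cong) (auto simp: Suc_diff_le)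
  then show ?thesis by simp
qed

lemma hid:
  fixes q :: complex
  shows "(\<Sum>i\<le>d. of_nat (k + 1 + d choose i) * q^i * (1-q)^(d - i)) = (\<Sum>j\<le>d. of_nat (k + j choose j) * q^j)"
proof (induction d)
  case 0 then show ?case by simp
next
  case (Suc d)
  have "(\<Sum>i\<le>Suc d. of_nat (k + 1 + Suc d choose i) * q^i * (1-q)^(Suc d - i))
     = (\<Sum>i\<le>Suc d. of_nat (Suc (k + 1 + d) choose i) * q^i * (1-q)^(Suc d - i))" by simp
  also have "\<dots> = (\<Sum>i\<le>d. of_nat (k + 1 + d choose i) * q^i * (1-q)^(d - i)) + of_nat (k + 1 + d choose Suc d) * q ^ Suc d"
    unfolding g_step1 g_step2 by (simp add: algebra_simps)
  also have "\<dots> = (\<Sum>j\<le>Suc d. of_nat (k + j choose j) * q^j)"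
    using Suc by simp
  finally show ?case .
qed

lemma tele:
  fixes b :: "nat \<Rightarrow> real" and z :: complex
  shows "(1 - z) * (\<Sum>i\<le>d. of_real (b i) * z^i) = of_real (b 0) + (\<Sum>i<d. of_real (b (Suc i) - b i) * z^(Suc i)) - of_real (b d) * z^(Suc d)"
  by (induction d) (simp_all add: algebra_simps)

lemma EK_upper:
  fixes b :: "nat \<Rightarrow> real" and z :: complex
  assumes pos: "\<And>i. i \<le> d \<Longrightarrow> b i > 0" and mono: "\<And>i. i < d \<Longrightarrow> b i \<le> b (Suc i)"
    and d: "1 \<le> d" and z0: "(\<Sum>i\<le>d. of_real (b i) * z^i) = 0"
  shows "cmod z \<le> 1"
proof (rule ccontr)
  assume "\<not> cmod z \<le> 1"
  hence z1: "cmod z > 1" by simp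
  have eq: "of_real (b d) * z^(Suc d) = of_real (b 0) + (\<Sum>i<d. of_real (b (Suc i) - b i) * z^(Suc i))"
    using tele[of z b d] z0 by (simp add: algebra_simps)
  have "b d * cmod z ^ Suc d = cmod (of_real (b d) * z^(Suc d))"
    using pos[of d] by (simp add: norm_mult norm_power)
  also have "\<dots> \<le> cmod (of_real (b 0) :: complex) + cmod (\<Sum>i<d. of_real (b (Suc i) - b i) * z^(Suc i))"
    unfolding eq by (rule norm_triangle_ineq)
  also have "\<dots> \<le> b 0 + (\<Sum>i<d. (b (Suc i) - b i) * cmod z ^ d)"
  proof -
    have "cmod (\<Sum>i<d. of_real (b (Suc i) - b i) * z^(Suc i)) \<le> (\<Sum>i<d. cmod (of_real (b (Suc i) - b i) * z^(Suc i)))"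
      by (rule norm_sum)
    also have "\<dots> \<le> (\<Sum>i<d. (b (Suc i) - b i) * cmod z ^ d)"
    proof (rule sum_mono)
      fix i assume "i \<in> {..<d}"
      hence i: "i < d" by simp
      have "cmod z ^ Suc i \<le> cmod z ^ d" using z1 i by (intro power_increasing) auto
      then show "cmod (of_real (b (Suc i) - b i) * z^(Suc i)) \<le> (b (Suc i) - b i) * cmod z ^ d"
      proof -
        have "cmod (of_real (b (Suc i) - b i) * z^(Suc i)) = (b (Suc i) - b i) * cmod z ^ Suc i"
          using mono[OF i] by (simp add: norm_mult norm_power del: of_real_diff)
        thus ?thesis using mono[OF i] \<open>cmod z ^ Suc i \<le> cmod z ^ d\<close> by (simp add: mult_left_mono)
      qed
    qed
    finally show ?thesis using pos[of 0] by simp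
  qed
  also have "\<dots> = b 0 + (b d - b 0) * cmod z ^ d"
    by (simp add: sum_distrib_right[symmetric] sum_lessThan_telescope)
  also have "\<dots> < b d * cmod z ^ d"
  proof -
    have "1 < cmod z ^ d" using z1 d by (simp add: one_less_power)
    hence "b 0 * 1 < b 0 * cmod z ^ d" using pos[of 0] by (intro mult_strict_left_mono) auto
    thus ?thesis by (simp add: algebra_simps)
  qed
  also have "\<dots> \<le> b d * cmod z ^ Suc d"
    using pos[of d] z1 by (intro mult_left_mono power_increasing) auto
  finally show False by simp
qed

lemma EK_lower:
  fixes b :: "nat \<Rightarrow> real" and z :: complex
  assumes pos: "\<And>i. i \<le> d \<Longrightarrow> b i > 0" and mono: "\<And>i. i < d \<Longrightarrow> b (Suc i) \<le> b i"
    and z0: "(\<Sum>i\<le>d. of_real (b i) * z^i) = 0"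
  shows "1 \<le> cmod z"
proof (rule ccontr)
  assume "\<not> 1 \<le> cmod z"
  hence z1: "cmod z < 1" by simp
  have eq: "of_real (b 0) = (\<Sum>i<d. of_real (b i - b (Suc i)) * z^(Suc i)) + of_real (b d) * z^(Suc d)"
    using tele[of z b d] z0 by (simp add: algebra_simps sum_subtractf of_real_diff)
  have "b 0 = cmod (of_real (b 0) :: complex)" using pos[of 0] by simp
  also have "\<dots> \<le> cmod (\<Sum>i<d. of_real (b i - b (Suc i)) * z^(Suc i)) + cmod (of_real (b d) * z^(Suc d))"
    unfolding eq by (rule norm_triangle_ineq)
  also have "\<dots> \<le> (\<Sum>i<d. (b i - b (Suc i)) * cmod z) + b d * cmod z"
  proof (rule add_mono)
    have "cmod (\<Sum>i<d. of_real (b i - b (Suc i)) * z^(Suc i)) \<le> (\<Sum>i<d. cmod (of_real (b i - b (Suc i)) * z^(Suc i)))"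
      by (rule norm_sum)
    also have "\<dots> \<le> (\<Sum>i<d. (b i - b (Suc i)) * cmod z)"
    proof (rule sum_mono)
      fix i assume "i \<in> {..<d}"
      hence i: "i < d" by simp
      have "cmod z ^ Suc i \<le> cmod z ^ 1" using z1 by (intro power_decreasing) auto
      then show "cmod (of_real (b i - b (Suc i)) * z^(Suc i)) \<le> (b i - b (Suc i)) * cmod z"
      proof -
        have "cmod (of_real (b i - b (Suc i)) * z^(Suc i)) = \<bar>b i - b (Suc i)\<bar> * cmod z ^ Suc i"
          unfolding norm_mult norm_power norm_of_real ..
        also have "\<dots> = (b i - b (Suc i)) * cmod z ^ Suc i" using mono[OF i] by simp
        finally show ?thesis using mono[OF i] \<open>cmod z ^ Suc i \<le> cmod z ^ 1\<close> by (simp add: mult_left_mono)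
      qed
    qed
    finally show "cmod (\<Sum>i<d. of_real (b i - b (Suc i)) * z^(Suc i)) \<le> (\<Sum>i<d. (b i - b (Suc i)) * cmod z)" .
    have "cmod z ^ Suc d \<le> cmod z ^ 1" using z1 by (intro power_decreasing) auto
    then show "cmod (of_real (b d) * z^(Suc d)) \<le> b d * cmod z"
      using pos[of d] by (simp add: norm_mult norm_power mult_left_mono)
  qed
  also have "\<dots> = b 0 * cmod z"
  proof -
    have "(\<Sum>i<d. (b i - b (Suc i))) = b 0 - b d"
      using sum_lessThan_telescope'[of b d] by simp
    hence "(\<Sum>i<d. (b i - b (Suc i)) * cmod z) + b d * cmod z = (b 0 - b d) * cmod z + b d * cmod z"
      by (simp add: sum_distrib_right[symmetric])
    thus ?thesis by (simp add: algebra_simps)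
  qed
  also have "\<dots> < b 0" using pos[of 0] z1 by simp
  finally show False by simp
qed


lemma poly_unif_H:
  fixes q :: complex
  shows "poly (unif_H m d) q = (\<Sum>i\<le>d. of_nat (m choose i) * q^i * (1-q)^(d - i))"
proof -
  have c: "coeff (unif_rank_gen m d) i = of_nat (m choose i)" if "i \<le> d" for i
  proof -
    have "coeff (unif_rank_gen m d) i = (\<Sum>j\<le>d. if j = i then of_nat (m choose j) else 0)"
      unfolding unif_rank_gen_def coeff_sum coeff_monom by (rule sum.cong) auto
    also have "\<dots> = of_nat (m choose i)" using that by (simp add: sum.delta)
    finally show ?thesis .
  qed
  show ?thesis unfolding unif_H_def poly_sum
    by (rule sum.cong) (auto simp: c poly_power)
qed

lemma poly_unif_H':
  fixes q :: complex
  assumes "1 \<le> d" "d < m"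
  shows "poly (unif_H m d) q = (\<Sum>j\<le>d. of_real (real (m - d - 1 + j choose j)) * q^j)"
proof -
  define k where "k = m - d - 1"
  have m: "m = k + 1 + d" using assms unfolding k_def by simp
  have "poly (unif_H m d) q = (\<Sum>j\<le>d. of_nat (k + j choose j) * q^j)"
    unfolding poly_unif_H using hid[of k d q] by (simp add: m)
  thus ?thesis by (simp add: k_def)
qed

theorem proposition6p3:
  fixes m d :: nat
  assumes "1 \<le> d" and "d < m"
  shows "(\<forall>q::complex. poly (unif_H m d) q = 0 \<longrightarrow>
            1 / real (m - d) \<le> cmod q \<and> cmod q \<le> real d / real (m - 1))
         \<and> schur_quasi_stable (unif_H m d)"
proof -
  define k where "k = m - d - 1"
  define a where "a i = real (k + i choose i)" for i
  have md: "m - d = k + 1" and m1: "m - 1 = k + d" using assms unfolding k_def by auto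
  have apos: "a i > 0" for i unfolding a_def by simp
  have rec: "real (Suc i) * a (Suc i) = real (k + Suc i) * a i" for i
  proof -
    have "Suc i * (Suc (k + i) choose Suc i) = Suc (k + i) * (k + i choose i)"
      by (rule Suc_times_binomial)
    hence "real (Suc i) * real (Suc (k + i) choose Suc i) = real (Suc (k + i)) * real (k + i choose i)"
      by (simp only: of_nat_mult[symmetric])
    moreover have "k + Suc i = Suc (k + i)" by simp
    ultimately show ?thesis unfolding a_def by metis
  qed
  have main: "1 / real (k + 1) \<le> cmod q \<and> cmod q \<le> real d / real (k + d)"
    if q0: "poly (unif_H m d) q = 0" for q :: complex
  proof
    have S: "(\<Sum>j\<le>d. of_real (a j) * q^j) = 0"
      using q0 poly_unif_H'[OF assms, of q] unfolding a_def k_def by simp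
    define r where "r = 1 / real (k + 1)"
    have rpos: "r > 0" unfolding r_def by simp
    define b where "b i = a i * r ^ i" for i
    have "(\<Sum>i\<le>d. of_real (b i) * (q / of_real r)^i) = (\<Sum>j\<le>d. of_real (a j) * q^j)"
      using rpos by (intro sum.cong) (auto simp: b_def power_divide)
    hence Sb: "(\<Sum>i\<le>d. of_real (b i) * (q / of_real r)^i) = 0" using S by simp
    have bmono: "b (Suc i) \<le> b i" if "i < d" for i
    proof -
      have "real (k + Suc i) * a i \<le> (real (Suc i) * real (k + 1)) * a i"
        using apos[of i] by (intro mult_right_mono) (auto simp: algebra_simps)
      hence "real (Suc i) * a (Suc i) \<le> real (Suc i) * (real (k + 1) * a i)"
        using rec[of i] by (simp add: algebra_simps)
      hence "a (Suc i) \<le> real (k + 1) * a i" by simp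
      hence "a (Suc i) * r \<le> a i" unfolding r_def by (simp add: field_simps)
      hence "(a (Suc i) * r) * r ^ i \<le> a i * r ^ i" using rpos by (intro mult_right_mono) auto
      thus ?thesis unfolding b_def by (simp add: algebra_simps)
    qed
    have "1 \<le> cmod (q / of_real r)"
      by (rule EK_lower[OF _ bmono Sb]) (use apos rpos in \<open>auto simp: b_def\<close>)
    moreover have "cmod (q / of_real r) = cmod q / r" using rpos by (simp add: norm_divide)
    ultimately have "r \<le> cmod q" using rpos by (simp add: field_simps)
    thus "1 / real (k + 1) \<le> cmod q" unfolding r_def .
  next
    have S: "(\<Sum>j\<le>d. of_real (a j) * q^j) = 0"
      using q0 poly_unif_H'[OF assms, of q] unfolding a_def k_def by simp
    define R where "R = real d / real (k + d)"
    have Rpos: "R > 0" unfolding R_def using assms by simp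
    define b where "b i = a i * R ^ i" for i
    have "(\<Sum>i\<le>d. of_real (b i) * (q / of_real R)^i) = (\<Sum>j\<le>d. of_real (a j) * q^j)"
      using Rpos by (intro sum.cong) (auto simp: b_def power_divide)
    hence Sb: "(\<Sum>i\<le>d. of_real (b i) * (q / of_real R)^i) = 0" using S by simp
    have bmono: "b i \<le> b (Suc i)" if "i < d" for i
    proof -
      have "real (Suc i) * real k \<le> real d * real k" using that by (intro mult_right_mono) auto
      hence "real (Suc i) * real (k + d) \<le> real (k + Suc i) * real d" by (simp add: algebra_simps)
      hence "(real (Suc i) * real (k + d)) * a i \<le> (real (k + Suc i) * real d) * a i"
        using apos[of i] by (intro mult_right_mono) auto
      hence "real (Suc i) * (real (k + d) * a i) \<le> real (Suc i) * (a (Suc i) * real d)"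
        using rec[of i] by (simp add: algebra_simps)
      hence "real (k + d) * a i \<le> a (Suc i) * real d" by simp
      hence "a i \<le> a (Suc i) * R" unfolding R_def using assms by (simp add: field_simps)
      hence "a i * R ^ i \<le> (a (Suc i) * R) * R ^ i" using Rpos by (intro mult_right_mono) auto
      thus ?thesis unfolding b_def by (simp add: algebra_simps)
    qed
    have "cmod (q / of_real R) \<le> 1"
      by (rule EK_upper[OF _ bmono assms(1) Sb]) (use apos Rpos in \<open>auto simp: b_def\<close>)
    moreover have "cmod (q / of_real R) = cmod q / R" using Rpos by (simp add: norm_divide)
    ultimately have "cmod q \<le> R" using Rpos by (simp add: field_simps)
    thus "cmod q \<le> real d / real (k + d)" unfolding R_def .
  qed
  have le1: "real d / real (k + d) \<le> 1" using assms by simp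
  show ?thesis
    unfolding schur_quasi_stable_def md m1 using main le1 by (meson order_trans)
qed

end
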